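(* Let $c$ be a real number with $2<c<4$. There exists $k(c)$ such that for every integer $k>k(c)$ for which $n=ck$ is an integer, there is an intersecting family $\mathcal F\subset\binom{[n]}{k}$ with $$|\mathcal D(\mathcal F)|>\sum_{0\le \ell<k}\binom{n-1}{\ell}.$$
   Context: $[n]=\{1,\dots,n\}$; $\binom{[n]}{k}$ is the family of all $k$-element subsets of $[n]$. A family $\mathcal F$ is intersecting if $F\cap F'\neq\varnothing$ for all $F,F'\in\mathcal F$. $\mathcal D(\mathcal F):=\{F\setminus F' : F,F'\in\mathcal F\}$. *)

theory Defs
  imports Complex_Main
begin

definition intersecting :: "'a set set \<Rightarrow> bool" where
  "intersecting \<F> \<longleftrightarrow> (\<forall>F\<in>\<F>. \<forall>F'\<in>\<F>. F \<inter> F' \<noteq> {})"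

definition diff_family :: "'a set set \<Rightarrow> 'a set set" where
  "diff_family \<F> = {F - F' | F F'. F \<in> \<F> \<and> F' \<in> \<F>}"

definition k_subsets :: "nat \<Rightarrow> nat \<Rightarrow> nat set set" where
  "k_subsets n k = {A. A \<subseteq> {1..n} \<and> card A = k}"

end

theory Submission
  imports Defs
begin

lemma choose_step: "(m choose Suc s) * Suc s = (m choose s) * (m - s)"
  using binomial_absorb_comp[of m s] binomial_absorption[of s m] by (simp add: mult.commute)

lemma binom_ineq:
  fixes c :: real
  assumes c2: "2 < c" and c4: "c < 4"
  shows "\<exists>K::nat. \<forall>k n :: nat. K < k \<and> real n = c * real k \<longrightarrow>
           (n-k-1) choose (k-1) < (\<Sum>l<k-1. (n-k-1) choose l)"
proof -
  define r where "r = min 1 (1/(c-2))"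
  define \<rho> where "\<rho> = (1/2 + r)/2"
  have r1: "r > 1/2" using c2 c4 by (auto simp: r_def field_simps)
  have rh: "1/2 < \<rho>" "\<rho> < 1" "\<rho> * (c-2) < 1"
  proof -
    show "1/2 < \<rho>" using r1 by (simp add: \<rho>_def)
    show "\<rho> < 1" using r1 by (simp add: \<rho>_def r_def)
    have "\<rho> < 1/(c-2)" using r1 by (simp add: \<rho>_def r_def)
    thus "\<rho> * (c-2) < 1" using c2 by (simp add: field_simps)
  qed
  have "(\<lambda>n. \<rho>^n) sums (1/(1-\<rho>))" by (rule geometric_sums) (use rh in auto)
  hence lim: "(\<lambda>n. \<Sum>i<n. \<rho>^i) \<longlonglongrightarrow> 1/(1-\<rho>)" by (simp add: sums_def)
  have "1/(1-\<rho>) > 2" using rh by (simp add: field_simps)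
  from order_tendstoD(1)[OF lim this] obtain j where j: "(\<Sum>i<j. \<rho>^i) > 2"
    by (auto simp: eventually_sequentially)
  have jsum: "(\<Sum>i<j. \<rho>^Suc i) > 1"
  proof -
    have "(\<Sum>i<j. \<rho>^Suc i) = \<rho> * (\<Sum>i<j. \<rho>^i)" by (simp add: sum_distrib_left)
    also have "\<dots> > \<rho> * 2" using j rh by simp
    finally show ?thesis using rh by simp
  qed
  define \<delta> where "\<delta> = 1 - \<rho> * (c-2)"
  have dpos: "\<delta> > 0" using rh by (simp add: \<delta>_def)
  define K where "K = nat \<lceil>(real j + 1) * (1 + \<rho>) / \<delta>\<rceil> + j + 2"
  show ?thesis
  proof (intro exI allI impI)
    fix k n :: nat assume a: "K < k \<and> real n = c * real k"
    hence kK: "K < k" and nk: "real n = c * real k" by auto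
    have kj: "k > j + 2" using kK by (simp add: K_def)
    have "real k > (real j + 1) * (1 + \<rho>) / \<delta>"
    proof -
      have "real (nat \<lceil>(real j + 1) * (1 + \<rho>) / \<delta>\<rceil>) < real k" using kK by (simp add: K_def)
      moreover have "(real j + 1) * (1 + \<rho>) / \<delta> \<le> real (nat \<lceil>(real j + 1) * (1 + \<rho>) / \<delta>\<rceil>)"
        by linarith
      ultimately show ?thesis by linarith
    qed
    hence kd: "real k * \<delta> > (real j + 1) * (1 + \<rho>)" using dpos by (simp add: field_simps)
    have n2k: "n > 2*k" using nk c2 kj
    proof -
      have "real n > 2 * real k" using nk c2 kj by (simp add: mult_strict_right_mono)
      thus ?thesis by linarith
    qed
    define m where "m = n - k - 1"
    define t where "t = k - 1"
    have mt: "real m - real t = (c-2) * real k" using n2k nk kj by (simp add: m_def t_def of_nat_diff algebra_simps)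
    have key: "real (m choose (t - i)) \<ge> \<rho>^i * real (m choose t)" if "i \<le> j" for i
      using that
    proof (induction i)
      case 0 thus ?case by simp
    next
      case (Suc i)
      hence IH: "real (m choose (t - i)) \<ge> \<rho>^i * real (m choose t)" by simp
      define s where "s = t - Suc i"
      have ts: "t - i = Suc s" using Suc.prems kj by (simp add: s_def t_def)
      have st: "real (Suc s) = real k - 1 - real i" using Suc.prems kj by (simp add: s_def t_def of_nat_diff)
      have ms: "real (m - s) = real m - real t + real i + 1" using Suc.prems kj n2k
        by (simp add: s_def t_def m_def of_nat_diff)
      have eq: "real (m choose (t - i)) * real (Suc s) = real (m choose s) * real (m - s)"
        using choose_step[of m s] ts by (metis of_nat_mult)
      have "s < m" using n2k Suc.prems kj by (simp add: s_def t_def m_def)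
      hence mspos: "real (m - s) > 0" by simp
      have ratio: "real (Suc s) \<ge> \<rho> * real (m - s)"
      proof -
        have ms2: "real (m - s) = (c-2)*real k + (real i + 1)" using ms mt by linarith
        have "\<rho> * real (m - s) = \<rho> * ((c-2)*real k) + \<rho> * (real i + 1)" unfolding ms2 by (simp add: distrib_left)
        also have "\<dots> \<le> \<rho> * ((c-2)*real k) + \<rho> * (real j)" using Suc.prems rh by (intro add_left_mono mult_left_mono) auto
        finally have "\<rho> * real (m - s) \<le> real k * (1 - \<delta>) + \<rho> * real j" by (simp add: \<delta>_def algebra_simps)
        moreover have "real i + 1 \<le> real j" using Suc.prems by simp
        moreover have "real k * \<delta> > real j + \<rho> * real j + 1 + \<rho>" using kd by (simp add: algebra_simps)
        moreover have "real k * (1 - \<delta>) = real k - real k * \<delta>" by (simp add: algebra_simps)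
        ultimately show ?thesis using st rh by linarith
      qed
      have "real (m choose s) * real (m - s) = real (m choose (t - i)) * real (Suc s)" using eq by simp
      also have "\<dots> \<ge> real (m choose (t - i)) * (\<rho> * real (m - s))"
        using ratio by (intro mult_left_mono) auto
      finally have "real (m choose s) \<ge> \<rho> * real (m choose (t - i))" using mspos
        by (simp add: mult.assoc mult.left_commute)
      moreover have "\<rho> * real (m choose (t - i)) \<ge> \<rho> * (\<rho>^i * real (m choose t))"
        using IH rh by (intro mult_left_mono) auto
      ultimately show ?case by (simp add: s_def mult.assoc)
    qed
    have tm: "t \<le> m" using n2k by (simp add: t_def m_def)
    have pos: "real (m choose t) > 0" using tm by simp
    have "real (m choose t) < (\<Sum>i<j. \<rho>^Suc i) * real (m choose t)" using jsum pos by simp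
    also have "\<dots> = (\<Sum>i<j. \<rho>^Suc i * real (m choose t))" by (simp add: sum_distrib_right)
    also have "\<dots> \<le> (\<Sum>i<j. real (m choose (t - Suc i)))" by (intro sum_mono key) simp
    also have "\<dots> = real (\<Sum>i<j. m choose (t - Suc i))" by simp
    also have "(\<Sum>i<j. m choose (t - Suc i)) = (\<Sum>l\<in>(\<lambda>i. t - Suc i) ` {..<j}. m choose l)"
      by (rule sum.reindex[symmetric, unfolded comp_def]) (use kj in \<open>auto simp: inj_on_def t_def\<close>)
    also have "\<dots> \<le> (\<Sum>l<t. m choose l)"
      by (rule sum_mono2) (use kj in \<open>auto simp: t_def\<close>)
    finally have X: "real (m choose t) < real (\<Sum>l<t. m choose l)" by (simp only: of_nat_sum)
    hence "m choose t < (\<Sum>l<t. m choose l)" by (simp only: of_nat_less_iff)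
    thus "(n-k-1) choose (k-1) < (\<Sum>l<k-1. (n-k-1) choose l)"
      by (simp add: m_def t_def)
  qed
qed
lemma card_lt: "finite A \<Longrightarrow> card {D. D \<subseteq> A \<and> card D < r} = (\<Sum>l<r. card A choose l)"
proof (induction r)
  case 0 thus ?case by simp
next
  case (Suc r)
  have "{D. D \<subseteq> A \<and> card D < Suc r} = {D. D \<subseteq> A \<and> card D < r} \<union> {D. D \<subseteq> A \<and> card D = r}" by auto
  moreover have "card ({D. D \<subseteq> A \<and> card D < r} \<union> {D. D \<subseteq> A \<and> card D = r}) =
     card {D. D \<subseteq> A \<and> card D < r} + card {D. D \<subseteq> A \<and> card D = r}"
    by (rule card_Un_disjoint) (use Suc.prems in auto)
  ultimately show ?case using Suc n_subsets[OF Suc.prems, of r] by simp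
qed

context
  fixes n k :: nat
  assumes k2: "k \<ge> 2" and nk: "n \<ge> 2*k+1"
begin

definition "TT = {2..k+1}"
definition "FF = {S\<in>k_subsets n k. 1 \<in> S \<and> S \<inter> TT \<noteq> {}} \<union> {TT}"

lemma cardTT: "card TT = k" by (simp add: TT_def)

lemma TT_in: "TT \<in> k_subsets n k" using nk by (auto simp: TT_def k_subsets_def)

lemma FFI: "S \<subseteq> {1..n} \<Longrightarrow> card S = k \<Longrightarrow> 1 \<in> S \<Longrightarrow> y \<in> S \<Longrightarrow> y \<in> TT \<Longrightarrow> S \<in> FF"
  unfolding FF_def k_subsets_def by blast

lemma memA:
  assumes DU: "D \<subseteq> {2..n}" and Dk: "card D < k" and alt: "card D \<le> k-2 \<or> D \<inter> TT \<noteq> {}"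
  shows "D \<in> diff_family FF"
proof -
  have fD: "finite D" using DU finite_subset by blast
  have "\<not> TT \<subseteq> D"
  proof
    assume "TT \<subseteq> D"
    hence "card TT \<le> card D" by (rule card_mono[OF fD])
    thus False using cardTT Dk by simp
  qed
  then obtain x where x: "x \<in> TT" "x \<notin> D" by blast
  have x2: "x \<in> {2..n}" using x nk by (auto simp: TT_def)
  define d where "d = card D"
  define V where "V = {2..n} - D - {x}"
  have fV: "finite V" by (simp add: V_def)
  have "card ({2..n} - D) = card {2..n} - card D" using DU fD by (simp add: card_Diff_subset)
  moreover have "x \<in> {2..n} - D" using x x2 by simp
  ultimately have cV: "card V = n - 2 - d" unfolding V_def d_def by (simp add: card_Diff_singleton)
  have DV: "D \<inter> V = {}" "x \<notin> V" "1 \<notin> V" "V \<subseteq> {2..n}" by (auto simp: V_def)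
  have n1D: "1 \<notin> D" using DU by auto
  show ?thesis
  proof (cases "d \<le> k-2")
    case True
    have "k-2-d \<le> card V" using cV nk by simp
    then obtain P where P: "P \<subseteq> V" "card P = k-2-d" "finite P" by (rule obtain_subset_with_card_n)
    have cV': "card (V - P) = n - k" using P cV card_Diff_subset[OF P(3) P(1)] True k2 nk by simp
    hence "d \<le> card (V - P)" using Dk nk d_def by simp
    then obtain R where R: "R \<subseteq> V - P" "card R = d" "finite R" by (rule obtain_subset_with_card_n)
    define F1 where "F1 = insert 1 (insert x (D \<union> P))"
    define F2 where "F2 = insert 1 (insert x (P \<union> R))"
    have "D \<inter> P = {}" using DV P by blast
    hence "card (D \<union> P) = d + (k-2-d)" using P fD d_def by (simp add: card_Un_disjoint)
    moreover have "x \<notin> D \<union> P" "1 \<notin> insert x (D \<union> P)" using x DV P x2 n1D by auto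
    ultimately have cF1: "card F1 = k" using P fD True k2 unfolding F1_def by simp
    have "P \<inter> R = {}" using R by blast
    hence "card (P \<union> R) = (k-2-d) + d" using P R by (simp add: card_Un_disjoint)
    moreover have "x \<notin> P \<union> R" "1 \<notin> insert x (P \<union> R)" using x DV P R x2 by auto
    ultimately have cF2: "card F2 = k" using P R True k2 unfolding F2_def by simp
    have s1: "F1 \<subseteq> {1..n}" using DU P DV x2 unfolding F1_def by auto
    have s2: "F2 \<subseteq> {1..n}" using R P DV x2 unfolding F2_def by auto
    have F1in: "F1 \<in> FF" by (rule FFI[OF s1 cF1, of x]) (use x in \<open>auto simp: F1_def\<close>)
    have F2in: "F2 \<in> FF" by (rule FFI[OF s2 cF2, of x]) (use x in \<open>auto simp: F2_def\<close>)
    have "F1 - F2 = D" using DV P R x n1D unfolding F1_def F2_def by blast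
    thus ?thesis using F1in F2in unfolding diff_family_def by blast
  next
    case False
    hence dk: "d = k - 1" and DT: "D \<inter> TT \<noteq> {}" using alt Dk d_def by auto
    then obtain y where y: "y \<in> D" "y \<in> TT" by blast
    have "k-2 \<le> card V" using cV nk dk by simp
    then obtain R where R: "R \<subseteq> V" "card R = k-2" "finite R" by (rule obtain_subset_with_card_n)
    define F1 where "F1 = insert 1 D"
    define F2 where "F2 = insert 1 (insert x R)"
    have cF1: "card F1 = k" using fD n1D dk d_def k2 unfolding F1_def by simp
    have "x \<notin> R" "1 \<notin> insert x R" using R DV x2 by auto
    hence cF2: "card F2 = k" using R k2 unfolding F2_def by simp
    have s1: "F1 \<subseteq> {1..n}" using DU nk unfolding F1_def by auto
    have s2: "F2 \<subseteq> {1..n}" using R DV x2 unfolding F2_def by auto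
    have F1in: "F1 \<in> FF" by (rule FFI[OF s1 cF1, of y]) (use y in \<open>auto simp: F1_def\<close>)
    have F2in: "F2 \<in> FF" by (rule FFI[OF s2 cF2, of x]) (use x in \<open>auto simp: F2_def\<close>)
    have "F1 - F2 = D" using DV R x n1D unfolding F1_def F2_def by blast
    thus ?thesis using F1in F2in unfolding diff_family_def by blast
  qed
qed
lemma memB:
  assumes EW: "E \<subseteq> {k+2..n}" and Ek: "card E < k - 1"
  shows "insert 1 E \<in> diff_family FF"
proof -
  have fE: "finite E" using EW finite_subset by blast
  have "k-1-card E \<le> card TT" using cardTT by simp
  then obtain Y where Y: "Y \<subseteq> TT" "card Y = k-1-card E" "finite Y"
    by (rule obtain_subset_with_card_n)
  have "Y \<noteq> {}" using Y Ek by auto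
  then obtain y where y: "y \<in> Y" by blast
  define F1 where "F1 = insert 1 (E \<union> Y)"
  have YT: "Y \<subseteq> {2..k+1}" using Y(1) by (simp add: TT_def)
  have disj: "E \<inter> Y = {}" using EW YT by fastforce
  have n1: "1 \<notin> E \<union> Y" using EW YT by fastforce
  have "card (E \<union> Y) = card E + (k-1-card E)" using fE Y(3) disj Y(2) by (simp add: card_Un_disjoint)
  hence cF1: "card F1 = k" using n1 fE Y(3) Ek unfolding F1_def by simp
  have sub: "F1 \<subseteq> {1..n}" using EW YT nk unfolding F1_def by fastforce
  have F1in: "F1 \<in> FF" by (rule FFI[OF sub cF1, of y]) (use y Y(1) in \<open>auto simp: F1_def\<close>)
  have "F1 - TT = insert 1 E" using EW YT unfolding F1_def TT_def by fastforce
  moreover have "TT \<in> FF" by (simp add: FF_def)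
  ultimately show ?thesis using F1in unfolding diff_family_def by blast
qed
lemma FF_sub: "FF \<subseteq> k_subsets n k" using TT_in by (auto simp: FF_def)

lemma FF_int: "intersecting FF"
  unfolding intersecting_def FF_def TT_def using k2 by auto

lemma count:
  "card (diff_family FF) \<ge> (\<Sum>l<k. (n-1) choose l) - ((n-k-1) choose (k-1)) + (\<Sum>l<k-1. (n-k-1) choose l)"
proof -
  define X where "X = {D. D \<subseteq> {2..n} \<and> card D < k}"
  define L where "L = {D. D \<subseteq> {k+2..n} \<and> card D = k-1}"
  define B0 where "B0 = {E. E \<subseteq> {k+2..n} \<and> card E < k-1}"
  have cX: "card X = (\<Sum>l<k. (n-1) choose l)" unfolding X_def by (subst card_lt) auto
  have cL: "card L = (n-k-1) choose (k-1)" unfolding L_def by (subst n_subsets) auto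
  have cB0: "card B0 = (\<Sum>l<k-1. (n-k-1) choose l)" unfolding B0_def by (subst card_lt) auto
  have LX: "L \<subseteq> X"
  proof
    fix D assume "D \<in> L"
    hence "D \<subseteq> {k+2..n}" "card D = k-1" by (auto simp: L_def)
    moreover have "{k+2..n} \<subseteq> {2..n}" by auto
    ultimately show "D \<in> X" using k2 unfolding X_def by auto
  qed
  have fX: "finite X" unfolding X_def by (rule finite_subset[of _ "Pow {2..n}"]) auto
  have fB0: "finite B0" unfolding B0_def by (rule finite_subset[of _ "Pow {k+2..n}"]) auto
  have n1: "1 \<notin> A" if "A \<in> B0" for A using that by (auto simp: B0_def)
  have inj: "inj_on (insert 1) B0" unfolding inj_on_def using n1 by (metis insert_ident)
  have cB: "card (insert 1 ` B0) = card B0" by (rule card_image[OF inj])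
  have disj: "(X - L) \<inter> insert 1 ` B0 = {}" by (auto simp: X_def)
  have sub: "(X - L) \<union> insert 1 ` B0 \<subseteq> diff_family FF"
  proof
    fix D assume "D \<in> (X - L) \<union> insert 1 ` B0"
    thus "D \<in> diff_family FF"
    proof
      assume "D \<in> X - L"
      hence D: "D \<subseteq> {2..n}" "card D < k" "\<not> (D \<subseteq> {k+2..n} \<and> card D = k-1)" by (auto simp: X_def L_def)
      have "card D \<le> k-2 \<or> D \<inter> TT \<noteq> {}"
      proof (rule ccontr)
        assume "\<not> ?thesis"
        hence c1: "card D = k-1" and c2: "D \<inter> TT = {}" using D k2 by auto
        have "D \<subseteq> {k+2..n}"
        proof
          fix y assume "y \<in> D"
          hence "y \<in> {2..n}" "y \<notin> {2..k+1}" using D(1) c2 by (auto simp: TT_def)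
          thus "y \<in> {k+2..n}" by auto
        qed
        thus False using D c1 by auto
      qed
      thus ?thesis using memA D by blast
    next
      assume "D \<in> insert 1 ` B0"
      then obtain E where "E \<in> B0" "D = insert 1 E" by blast
      thus ?thesis using memB by (auto simp: B0_def)
    qed
  qed
  have fD: "finite (diff_family FF)"
  proof (rule finite_subset[of _ "Pow {1..n}"])
    show "diff_family FF \<subseteq> Pow {1..n}" using FF_sub by (auto simp: diff_family_def k_subsets_def)
  qed auto
  have "card ((X - L) \<union> insert 1 ` B0) = card (X - L) + card (insert 1 ` B0)"
    by (rule card_Un_disjoint) (use fX fB0 disj in auto)
  also have "card (X - L) = card X - card L" using LX fX by (simp add: card_Diff_subset finite_subset)
  finally have "card ((X - L) \<union> insert 1 ` B0) = card X - card L + card B0" using cB by simp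
  moreover have "card ((X - L) \<union> insert 1 ` B0) \<le> card (diff_family FF)" by (rule card_mono[OF fD sub])
  ultimately show ?thesis using cX cL cB0 by simp
qed

end

lemma choose_mono_top: "m \<le> m' \<Longrightarrow> m choose j \<le> m' choose j"
proof -
  assume mm: "m \<le> m'"
  have "card {B. B \<subseteq> {..<m} \<and> card B = j} \<le> card {B. B \<subseteq> {..<m'} \<and> card B = j}"
    by (rule card_mono) (use mm in \<open>auto intro: finite_subset[of _ "Pow {..<m'}"]\<close>)
  thus ?thesis by (simp add: n_subsets)
qed

theorem mainTheorem2:
  fixes c :: real
  assumes "2 < c" and "c < 4"
  shows "\<exists>K::nat. \<forall>k n :: nat. K < k \<and> real n = c * real k \<longrightarrow>
           (\<exists>\<F>. \<F> \<subseteq> k_subsets n k \<and> intersecting \<F> \<and>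
              card (diff_family \<F>) > (\<Sum>l<k. (n - 1) choose l))"
proof -
  obtain K where K: "\<forall>k n :: nat. K < k \<and> real n = c * real k \<longrightarrow>
           (n-k-1) choose (k-1) < (\<Sum>l<k-1. (n-k-1) choose l)"
    using binom_ineq[OF assms] by blast
  show ?thesis
  proof (rule exI[of _ "max K 2"], intro allI impI)
    fix k n :: nat assume a: "max K 2 < k \<and> real n = c * real k"
    hence k2: "2 \<le> k" and nk: "real n = c * real k" and Kk: "K < k" by auto
    have "real n > 2 * real k" using nk assms(1) k2 by (simp add: mult_strict_right_mono)
    hence nk2: "2*k+1 \<le> n" by linarith
    have lt: "(n-k-1) choose (k-1) < (\<Sum>l<k-1. (n-k-1) choose l)" using K Kk nk by blast
    have "(n-k-1) choose (k-1) \<le> (n-1) choose (k-1)" by (rule choose_mono_top) simp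
    also have "\<dots> \<le> (\<Sum>l<k. (n - 1) choose l)" by (rule member_le_sum) (use k2 in auto)
    finally have le: "(n-k-1) choose (k-1) \<le> (\<Sum>l<k. (n - 1) choose l)" .
    show "\<exists>\<F>. \<F> \<subseteq> k_subsets n k \<and> intersecting \<F> \<and>
              card (diff_family \<F>) > (\<Sum>l<k. (n - 1) choose l)"
    proof (rule exI[of _ "FF n k"], intro conjI)
      show "FF n k \<subseteq> k_subsets n k" by (rule FF_sub[OF k2 nk2])
      show "intersecting (FF n k)" by (rule FF_int[OF k2 nk2])
      show "card (diff_family (FF n k)) > (\<Sum>l<k. (n - 1) choose l)"
        using count[OF k2 nk2] lt le by linarith
    qed
  qed
qed

end
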